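(* Let $p$ be an odd prime, $r\ge3$ with $p\nmid r$, $d\ge2$, and let $G=V\rtimes_\psi D$ with $V=\mathbb{Z}_p^d$, $D=\mathrm{D}_{2r}$ and $\psi:D\to\mathrm{GL}(V)$ an irreducible representation over $\mathbb{F}_p$. Let $x,y\in D$ be involutions with $D=\langle x,y\rangle$, and let $v,v'$ be non-identity elements of $\mathrm{C}_V(x)$. Then $\mathsf{RotaMap}(G,vx,y)\cong\mathsf{RotaMap}(G,v'x,y)$.
   Context: $\mathrm{D}_{2r}$ is the dihedral group of order $2r$; $V\rtimes_\psi D$ is the semidirect product where $D$ acts on $V=\mathbb{F}_p^d$ via $\psi$, and $\mathrm{C}_V(x)$ is the centralizer of $x$ in $V$. For a group $G$ and $\rho,\tau\in G$ with $G=\langle\rho,\tau\rangle$ and $|\tau|=2$ (a rotary pair), $\mathsf{RotaMap}(G,\rho,\tau)$ is the map whose vertices, edges and faces are the left cosets of $\langle\rho\rangle$, $\langle\tau\rangle$ and $\langle\rho\tau\rangle$ in $G$ respectively, two objects being incident iff their intersection is nonempty; it is an orientable map on which $G$ acts (by left multiplication) regularly on arcs with cyclic vertex and face stabilizers. Isomorphism means isomorphism of maps. *)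

theory Defs
  imports "HOL-Algebra.Algebra"
begin

text \<open>Vectors of F_p^d are represented as functions nat => int, with entries in {0..<p}
  at coordinates < d and 0 elsewhere; addition is componentwise mod p.\<close>

definition Vset :: "nat \<Rightarrow> nat \<Rightarrow> (nat \<Rightarrow> int) set" where
  "Vset p d = {v. \<forall>i. (i < d \<longrightarrow> 0 \<le> v i \<and> v i < int p) \<and> (d \<le> i \<longrightarrow> v i = 0)}"

definition vzero :: "nat \<Rightarrow> int" where
  "vzero = (\<lambda>i. 0)"

definition vadd :: "nat \<Rightarrow> (nat \<Rightarrow> int) \<Rightarrow> (nat \<Rightarrow> int) \<Rightarrow> (nat \<Rightarrow> int)" where
  "vadd p u w = (\<lambda>i. (u i + w i) mod int p)"

definition vsmult :: "nat \<Rightarrow> int \<Rightarrow> (nat \<Rightarrow> int) \<Rightarrow> (nat \<Rightarrow> int)" where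
  "vsmult p c u = (\<lambda>i. (c * u i) mod int p)"

definition linear_Fp :: "nat \<Rightarrow> nat \<Rightarrow> ((nat \<Rightarrow> int) \<Rightarrow> (nat \<Rightarrow> int)) \<Rightarrow> bool" where
  "linear_Fp p d f \<longleftrightarrow>
     (\<forall>u\<in>Vset p d. \<forall>w\<in>Vset p d. f (vadd p u w) = vadd p (f u) (f w)) \<and>
     (\<forall>c\<in>{0..<int p}. \<forall>u\<in>Vset p d. f (vsmult p c u) = vsmult p c (f u))"

definition subspace_Fp :: "nat \<Rightarrow> nat \<Rightarrow> (nat \<Rightarrow> int) set \<Rightarrow> bool" where
  "subspace_Fp p d W \<longleftrightarrow> W \<subseteq> Vset p d \<and> vzero \<in> W \<and>
     (\<forall>u\<in>W. \<forall>w\<in>W. vadd p u w \<in> W) \<and>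
     (\<forall>c\<in>{0..<int p}. \<forall>u\<in>W. vsmult p c u \<in> W)"

text \<open>(k, False) is rho^k, (k, True) is rho^k sigma, with sigma rho sigma = rho^-1.\<close>
definition dihedral :: "nat \<Rightarrow> (nat \<times> bool) monoid" where
  "dihedral r = \<lparr> carrier = {0..<r} \<times> UNIV,
     monoid.mult = (\<lambda>(a, s) (b, t). ((a + (if s then r - b else b)) mod r, s \<noteq> t)),
     one = (0, False) \<rparr>"

definition is_rep :: "nat \<Rightarrow> nat \<Rightarrow> ('g, 'b) monoid_scheme \<Rightarrow>
    ('g \<Rightarrow> (nat \<Rightarrow> int) \<Rightarrow> (nat \<Rightarrow> int)) \<Rightarrow> bool" where
  "is_rep p d D \<psi> \<longleftrightarrow> \<psi> \<in> hom D (BijGroup (Vset p d)) \<and>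
     (\<forall>g\<in>carrier D. linear_Fp p d (\<psi> g))"

definition irreducible_rep :: "nat \<Rightarrow> nat \<Rightarrow> ('g, 'b) monoid_scheme \<Rightarrow>
    ('g \<Rightarrow> (nat \<Rightarrow> int) \<Rightarrow> (nat \<Rightarrow> int)) \<Rightarrow> bool" where
  "irreducible_rep p d D \<psi> \<longleftrightarrow> is_rep p d D \<psi> \<and> Vset p d \<noteq> {vzero} \<and>
     (\<forall>W. subspace_Fp p d W \<and> (\<forall>g\<in>carrier D. \<psi> g ` W \<subseteq> W) \<longrightarrow>
          W = {vzero} \<or> W = Vset p d)"

text \<open>V \<rtimes>_psi D, elements (v, a) standing for v a.\<close>
definition semidirect :: "nat \<Rightarrow> nat \<Rightarrow> ('g, 'b) monoid_scheme \<Rightarrow>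
    ('g \<Rightarrow> (nat \<Rightarrow> int) \<Rightarrow> (nat \<Rightarrow> int)) \<Rightarrow> ((nat \<Rightarrow> int) \<times> 'g) monoid" where
  "semidirect p d D \<psi> = \<lparr> carrier = Vset p d \<times> carrier D,
     monoid.mult = (\<lambda>(u, a) (w, b). (vadd p u (\<psi> a w), a \<otimes>\<^bsub>D\<^esub> b)),
     one = (vzero, \<one>\<^bsub>D\<^esub>) \<rparr>"

text \<open>C_V(x): elements of V (embedded as (v,1)) commuting in G with x (embedded as (0,x)).\<close>
definition centraliser_V :: "nat \<Rightarrow> nat \<Rightarrow> ('g, 'b) monoid_scheme \<Rightarrow>
    ('g \<Rightarrow> (nat \<Rightarrow> int) \<Rightarrow> (nat \<Rightarrow> int)) \<Rightarrow> 'g \<Rightarrow> (nat \<Rightarrow> int) set" where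
  "centraliser_V p d D \<psi> x = {v \<in> Vset p d.
     (v, \<one>\<^bsub>D\<^esub>) \<otimes>\<^bsub>semidirect p d D \<psi>\<^esub> (vzero, x) =
     (vzero, x) \<otimes>\<^bsub>semidirect p d D \<psi>\<^esub> (v, \<one>\<^bsub>D\<^esub>)}"

definition involution :: "('g, 'b) monoid_scheme \<Rightarrow> 'g \<Rightarrow> bool" where
  "involution D x \<longleftrightarrow> x \<in> carrier D \<and> x \<noteq> \<one>\<^bsub>D\<^esub> \<and> x \<otimes>\<^bsub>D\<^esub> x = \<one>\<^bsub>D\<^esub>"

definition rota_vertices :: "('a, 'b) monoid_scheme \<Rightarrow> 'a \<Rightarrow> 'a \<Rightarrow> 'a set set" where
  "rota_vertices G \<rho> \<tau> = (\<lambda>g. g <#\<^bsub>G\<^esub> generate G {\<rho>}) ` carrier G"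

definition rota_edges :: "('a, 'b) monoid_scheme \<Rightarrow> 'a \<Rightarrow> 'a \<Rightarrow> 'a set set" where
  "rota_edges G \<rho> \<tau> = (\<lambda>g. g <#\<^bsub>G\<^esub> generate G {\<tau>}) ` carrier G"

definition rota_faces :: "('a, 'b) monoid_scheme \<Rightarrow> 'a \<Rightarrow> 'a \<Rightarrow> 'a set set" where
  "rota_faces G \<rho> \<tau> = (\<lambda>g. g <#\<^bsub>G\<^esub> generate G {\<rho> \<otimes>\<^bsub>G\<^esub> \<tau>}) ` carrier G"

text \<open>Isomorphism of RotaMap(G1,rho1,tau1) and RotaMap(G2,rho2,tau2): type-preserving
  bijections of vertices, edges and faces preserving and reflecting incidence
  (incidence = nonempty intersection).\<close>
definition incidence_preserving :: "'a set set \<Rightarrow> 'a set set \<Rightarrow> ('a set \<Rightarrow> 'c set) \<Rightarrow>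
    ('a set \<Rightarrow> 'c set) \<Rightarrow> bool" where
  "incidence_preserving A B f g \<longleftrightarrow>
     (\<forall>a\<in>A. \<forall>b\<in>B. (a \<inter> b \<noteq> {}) \<longleftrightarrow> (f a \<inter> g b \<noteq> {}))"

definition rota_map_iso :: "('a, 'b) monoid_scheme \<Rightarrow> 'a \<Rightarrow> 'a \<Rightarrow>
    ('c, 'e) monoid_scheme \<Rightarrow> 'c \<Rightarrow> 'c \<Rightarrow> bool" where
  "rota_map_iso G1 \<rho>1 \<tau>1 G2 \<rho>2 \<tau>2 \<longleftrightarrow>
    (\<exists>fv fe ff.
       bij_betw fv (rota_vertices G1 \<rho>1 \<tau>1) (rota_vertices G2 \<rho>2 \<tau>2) \<and>
       bij_betw fe (rota_edges G1 \<rho>1 \<tau>1) (rota_edges G2 \<rho>2 \<tau>2) \<and>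
       bij_betw ff (rota_faces G1 \<rho>1 \<tau>1) (rota_faces G2 \<rho>2 \<tau>2) \<and>
       incidence_preserving (rota_vertices G1 \<rho>1 \<tau>1) (rota_edges G1 \<rho>1 \<tau>1) fv fe \<and>
       incidence_preserving (rota_vertices G1 \<rho>1 \<tau>1) (rota_faces G1 \<rho>1 \<tau>1) fv ff \<and>
       incidence_preserving (rota_edges G1 \<rho>1 \<tau>1) (rota_faces G1 \<rho>1 \<tau>1) fe ff)"

end

theory Submission
  imports Defs
begin

lemma coset_img:
  assumes "group G" "\<alpha> \<in> hom G G" "g \<in> carrier G" "H \<subseteq> carrier G"
  shows "\<alpha> ` (g <#\<^bsub>G\<^esub> H) = \<alpha> g <#\<^bsub>G\<^esub> (\<alpha> ` H)"
proof -
  have "\<alpha> ` (g <#\<^bsub>G\<^esub> H) = (\<Union>h\<in>H. {\<alpha> (g \<otimes>\<^bsub>G\<^esub> h)})"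
    unfolding l_coset_def by blast
  also have "\<dots> = (\<Union>h\<in>H. {\<alpha> g \<otimes>\<^bsub>G\<^esub> \<alpha> h})"
    using assms(2,3,4) by (intro SUP_cong refl) (simp add: hom_mult subsetD)
  also have "\<dots> = \<alpha> g <#\<^bsub>G\<^esub> (\<alpha> ` H)"
    unfolding l_coset_def by blast
  finally show ?thesis .
qed

lemma cosets_img:
  assumes G: "group G" and h: "\<alpha> \<in> hom G G" and b: "bij_betw \<alpha> (carrier G) (carrier G)"
    and a: "a \<in> carrier G"
  shows "(\<lambda>C. \<alpha> ` C) ` ((\<lambda>g. g <#\<^bsub>G\<^esub> generate G {a}) ` carrier G)
       = (\<lambda>g. g <#\<^bsub>G\<^esub> generate G {\<alpha> a}) ` carrier G"
proof -
  interpret gh: group_hom G G \<alpha> using G h by (simp add: group_hom_def group_hom_axioms_def)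
  have sub: "generate G {a} \<subseteq> carrier G" using a by (simp add: group.generate_incl[OF G])
  have gi: "\<alpha> ` generate G {a} = generate G {\<alpha> a}" using gh.generate_img[of "{a}"] a by simp
  have "(\<lambda>C. \<alpha> ` C) ` ((\<lambda>g. g <#\<^bsub>G\<^esub> generate G {a}) ` carrier G)
      = (\<lambda>g. \<alpha> g <#\<^bsub>G\<^esub> generate G {\<alpha> a}) ` carrier G"
    unfolding image_image using coset_img[OF G h _ sub] gi by simp
  also have "\<dots> = (\<lambda>g. g <#\<^bsub>G\<^esub> generate G {\<alpha> a}) ` (\<alpha> ` carrier G)"
    by (simp add: image_image)
  also have "\<alpha> ` carrier G = carrier G" using b by (simp add: bij_betw_def)
  finally show ?thesis .
qed

lemma cosets_sub:
  assumes G: "group G" and a: "a \<in> carrier G" and C: "C \<in> (\<lambda>g. g <#\<^bsub>G\<^esub> generate G {a}) ` carrier G"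
  shows "C \<subseteq> carrier G"
proof -
  obtain g where g: "g \<in> carrier G" "C = g <#\<^bsub>G\<^esub> generate G {a}" using C by auto
  have "generate G {a} \<subseteq> carrier G" using group.generate_incl[OF G] a by simp
  then show ?thesis using group.l_coset_subset_G[OF G _ g(1)] g(2) by simp
qed

lemma img_bij:
  assumes G: "group G" and h: "\<alpha> \<in> hom G G" and b: "bij_betw \<alpha> (carrier G) (carrier G)"
    and a: "a \<in> carrier G"
  shows "bij_betw (\<lambda>C. \<alpha> ` C) ((\<lambda>g. g <#\<^bsub>G\<^esub> generate G {a}) ` carrier G)
       ((\<lambda>g. g <#\<^bsub>G\<^esub> generate G {\<alpha> a}) ` carrier G)"
proof -
  have "inj_on \<alpha> (\<Union>((\<lambda>g. g <#\<^bsub>G\<^esub> generate G {a}) ` carrier G))"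
  proof (rule inj_on_subset)
    show "inj_on \<alpha> (carrier G)" using b by (simp add: bij_betw_def)
    show "\<Union>((\<lambda>g. g <#\<^bsub>G\<^esub> generate G {a}) ` carrier G) \<subseteq> carrier G"
      using cosets_sub[OF G a] by blast
  qed
  then have "inj_on ((`) \<alpha>) ((\<lambda>g. g <#\<^bsub>G\<^esub> generate G {a}) ` carrier G)"
    by (rule inj_on_image)
  then show ?thesis unfolding bij_betw_def using cosets_img[OF assms] by simp
qed

lemma img_inc:
  assumes G: "group G" and b: "bij_betw \<alpha> (carrier G) (carrier G)"
    and a: "a \<in> carrier G" and c: "c \<in> carrier G"
  shows "incidence_preserving ((\<lambda>g. g <#\<^bsub>G\<^esub> generate G {a}) ` carrier G)
       ((\<lambda>g. g <#\<^bsub>G\<^esub> generate G {c}) ` carrier G) (\<lambda>C. \<alpha> ` C) (\<lambda>C. \<alpha> ` C)"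
  unfolding incidence_preserving_def
proof (intro ballI)
  fix A B assume A: "A \<in> (\<lambda>g. g <#\<^bsub>G\<^esub> generate G {a}) ` carrier G"
    and B: "B \<in> (\<lambda>g. g <#\<^bsub>G\<^esub> generate G {c}) ` carrier G"
  have "\<alpha> ` (A \<inter> B) = \<alpha> ` A \<inter> \<alpha> ` B"
    using inj_on_image_Int[of \<alpha> "carrier G" A B] b cosets_sub[OF G a A] cosets_sub[OF G c B]
    by (simp add: bij_betw_def)
  then show "(A \<inter> B \<noteq> {}) = (\<alpha> ` A \<inter> \<alpha> ` B \<noteq> {})" by auto
qed

lemma auto_rota_iso:
  assumes G: "group G" and h: "\<alpha> \<in> hom G G" and b: "bij_betw \<alpha> (carrier G) (carrier G)"
    and r: "\<rho> \<in> carrier G" and t: "\<tau> \<in> carrier G"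
    and r': "\<alpha> \<rho> = \<rho>'" and t': "\<alpha> \<tau> = \<tau>'"
  shows "rota_map_iso G \<rho> \<tau> G \<rho>' \<tau>'"
proof -
  have rt: "\<rho> \<otimes>\<^bsub>G\<^esub> \<tau> \<in> carrier G" using G r t by (simp add: group.is_monoid monoid.m_closed)
  have e: "\<alpha> (\<rho> \<otimes>\<^bsub>G\<^esub> \<tau>) = \<rho>' \<otimes>\<^bsub>G\<^esub> \<tau>'" using h r t r' t' by (simp add: hom_mult)
  note X = img_bij[OF G h b r] img_bij[OF G h b t] img_bij[OF G h b rt]
      img_inc[OF G b r t] img_inc[OF G b r rt] img_inc[OF G b t rt]
  note Y = X[unfolded r' t' e]
  have 1: "bij_betw ((`) \<alpha>) (rota_vertices G \<rho> \<tau>) (rota_vertices G \<rho>' \<tau>')"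
    unfolding rota_vertices_def by (rule Y(1))
  have 2: "bij_betw ((`) \<alpha>) (rota_edges G \<rho> \<tau>) (rota_edges G \<rho>' \<tau>')"
    unfolding rota_edges_def by (rule Y(2))
  have 3: "bij_betw ((`) \<alpha>) (rota_faces G \<rho> \<tau>) (rota_faces G \<rho>' \<tau>')"
    unfolding rota_faces_def by (rule Y(3))
  have 4: "incidence_preserving (rota_vertices G \<rho> \<tau>) (rota_edges G \<rho> \<tau>) ((`) \<alpha>) ((`) \<alpha>)"
    unfolding rota_vertices_def rota_edges_def by (rule Y(4))
  have 5: "incidence_preserving (rota_vertices G \<rho> \<tau>) (rota_faces G \<rho> \<tau>) ((`) \<alpha>) ((`) \<alpha>)"
    unfolding rota_vertices_def rota_faces_def by (rule Y(5))
  have 6: "incidence_preserving (rota_edges G \<rho> \<tau>) (rota_faces G \<rho> \<tau>) ((`) \<alpha>) ((`) \<alpha>)"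
    unfolding rota_edges_def rota_faces_def by (rule Y(6))
  show ?thesis unfolding rota_map_iso_def
    apply (rule exI[of _ "(`) \<alpha>"])
    apply (rule exI[of _ "(`) \<alpha>"])
    apply (rule exI[of _ "(`) \<alpha>"])
    using 1 2 3 4 5 6 by (intro conjI)
qed

lemma dih_mult: "(a,s) \<otimes>\<^bsub>dihedral r\<^esub> (b,t) = ((a + (if s then r - b else b)) mod r, s \<noteq> t)"
  by (simp add: dihedral_def)
lemma dih_one: "\<one>\<^bsub>dihedral r\<^esub> = (0, False)" by (simp add: dihedral_def)
lemma dih_carrier: "carrier (dihedral r) = {0..<r} \<times> UNIV" by (simp add: dihedral_def)

lemma MD: "(z::int) mod m = z - m * (z div m)" by (simp add: minus_div_mult_eq_mod[symmetric] algebra_simps)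
lemma ME: "m dvd ((x::int) - y) \<Longrightarrow> x mod m = y mod m" by (simp add: mod_eq_dvd_iff)
lemma L: "q < (r::nat) \<Longrightarrow> int (a + r - q) = int a + int r - int q" by simp
lemma L3: "0 < (r::nat) \<Longrightarrow> int (a + r - x mod r) = int a + int r - int x mod int r"
  by (metis L mod_less_divisor zmod_int)

lemma dih_assoc_aux:
  fixes a b c r :: nat
  assumes "a < r" "b < r" "c < r"
  shows "((a + (if s then r - b else b)) mod r + (if s \<noteq> t then r - c else c)) mod r
       = (a + (if s then r - (b + (if t then r - c else c)) mod r else (b + (if t then r - c else c)) mod r)) mod r"
proof -
  have r0: "r > 0" using assms by simp
  show ?thesis
    apply (rule int_int_eq[THEN iffD1])
    using assms r0
    apply (cases s; cases t)
    apply (simp_all add: zmod_int of_nat_diff less_imp_le L3)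
    apply (rule ME, simp only: MD, simp add: algebra_simps)+
    done
qed

lemma dih_group: assumes "0 < r" shows "group (dihedral r)"
proof (rule groupI)
  show "\<And>x y. x \<in> carrier (dihedral r) \<Longrightarrow> y \<in> carrier (dihedral r) \<Longrightarrow>
     x \<otimes>\<^bsub>dihedral r\<^esub> y \<in> carrier (dihedral r)"
    using assms by (auto simp: dih_carrier dih_mult split: prod.splits)
  show "\<one>\<^bsub>dihedral r\<^esub> \<in> carrier (dihedral r)" using assms by (simp add: dih_one dih_carrier)
  show "\<And>x y z. x \<in> carrier (dihedral r) \<Longrightarrow> y \<in> carrier (dihedral r) \<Longrightarrow> z \<in> carrier (dihedral r) \<Longrightarrow>
     x \<otimes>\<^bsub>dihedral r\<^esub> y \<otimes>\<^bsub>dihedral r\<^esub> z = x \<otimes>\<^bsub>dihedral r\<^esub> (y \<otimes>\<^bsub>dihedral r\<^esub> z)"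
  proof -
    fix x y z assume "x \<in> carrier (dihedral r)" "y \<in> carrier (dihedral r)" "z \<in> carrier (dihedral r)"
    then obtain a s b t c u where xyz: "x = (a,s)" "y = (b,t)" "z = (c,u)" "a < r" "b < r" "c < r"
      by (auto simp: dih_carrier)
    show "x \<otimes>\<^bsub>dihedral r\<^esub> y \<otimes>\<^bsub>dihedral r\<^esub> z = x \<otimes>\<^bsub>dihedral r\<^esub> (y \<otimes>\<^bsub>dihedral r\<^esub> z)"
      unfolding xyz(1-3) dih_mult using dih_assoc_aux[OF xyz(4-6), of s t] by auto
  qed
  show "\<And>x. x \<in> carrier (dihedral r) \<Longrightarrow> \<one>\<^bsub>dihedral r\<^esub> \<otimes>\<^bsub>dihedral r\<^esub> x = x"
    by (auto simp: dih_carrier dih_mult dih_one)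
  show "\<exists>y\<in>carrier (dihedral r). y \<otimes>\<^bsub>dihedral r\<^esub> x = \<one>\<^bsub>dihedral r\<^esub>"
    if "x \<in> carrier (dihedral r)" for x
  proof -
    have xc: "x \<in> {0..<r} \<times> UNIV" using that by (simp add: dih_carrier)
    obtain a s where x: "x = (a,s)" "a < r" using xc by (cases x) auto
    show ?thesis
    proof (cases s)
      case True
      then show ?thesis using x by (intro bexI[of _ "(a,True)"]) (auto simp: dih_carrier dih_mult dih_one)
    next
      case False
      have e: "((r - a) mod r + a) mod r = 0"
      proof (cases "a = 0")
        case True then show ?thesis by simp
      next
        case False
        then have "(r - a) mod r = r - a" using x(2) by simp
        then show ?thesis using x(2) by simp
      qed
      have "((r - a) mod r, False) \<otimes>\<^bsub>dihedral r\<^esub> x = \<one>\<^bsub>dihedral r\<^esub>"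
        using e x False by (simp add: dih_mult dih_one)
      moreover have "((r - a) mod r, False) \<in> carrier (dihedral r)" using assms by (simp add: dih_carrier)
      ultimately show ?thesis by blast
    qed
  qed
qed

lemma dih_snd: "snd (g \<otimes>\<^bsub>dihedral r\<^esub> h) = (snd g \<noteq> snd h)"
  by (cases g; cases h) (simp add: dih_mult)

lemma dih_refl_sq: "g \<in> carrier (dihedral r) \<Longrightarrow> snd g \<Longrightarrow> g \<otimes>\<^bsub>dihedral r\<^esub> g = \<one>\<^bsub>dihedral r\<^esub>"
  by (cases g) (auto simp: dih_mult dih_one dih_carrier)

lemma dih_rot_comm: "\<not> snd g \<Longrightarrow> \<not> snd h \<Longrightarrow> g \<otimes>\<^bsub>dihedral r\<^esub> h = h \<otimes>\<^bsub>dihedral r\<^esub> g"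
  by (cases g; cases h) (simp add: dih_mult add.commute)

lemma dih_nonabelian: assumes "3 \<le> r"
  shows "\<not> (\<forall>g\<in>carrier (dihedral r). \<forall>h\<in>carrier (dihedral r). g \<otimes>\<^bsub>dihedral r\<^esub> h = h \<otimes>\<^bsub>dihedral r\<^esub> g)"
proof
  assume A: "\<forall>g\<in>carrier (dihedral r). \<forall>h\<in>carrier (dihedral r). g \<otimes>\<^bsub>dihedral r\<^esub> h = h \<otimes>\<^bsub>dihedral r\<^esub> g"
  have "(1,False) \<otimes>\<^bsub>dihedral r\<^esub> (0,True) = (0,True) \<otimes>\<^bsub>dihedral r\<^esub> (1,False)"
    using A assms by (auto simp: dih_carrier)
  then have "1 mod r = (r - 1) mod r" by (simp add: dih_mult)
  then show False using assms by simp
qed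

lemma central_rot:
  assumes "involution (dihedral r) x" "\<not> snd x" "0 < r"
  shows "\<forall>g\<in>carrier (dihedral r). x \<otimes>\<^bsub>dihedral r\<^esub> g = g \<otimes>\<^bsub>dihedral r\<^esub> x"
proof
  fix g assume g: "g \<in> carrier (dihedral r)"
  obtain a where x: "x = (a,False)" "a < r" "a \<noteq> 0" "(a + a) mod r = 0"
    using assms unfolding involution_def by (cases x) (auto simp: dih_carrier dih_mult dih_one)
  have "a + a = r"
  proof -
    have "a + a < 2 * r" using x by simp
    moreover have "r dvd a + a" using x(4) by (simp add: mod_eq_0_iff_dvd)
    then obtain k where k: "a + a = r * k" by (auto simp: dvd_def)
    have "k < 2" using k \<open>a + a < 2 * r\<close> by (metis mult.commute mult_less_cancel1)
    moreover have "k \<noteq> 0" using k x(3) by (metis add_is_0 mult_0_right)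
    ultimately have "k = 1" by simp
    then show ?thesis using k by simp
  qed
  then show "x \<otimes>\<^bsub>dihedral r\<^esub> g = g \<otimes>\<^bsub>dihedral r\<^esub> x"
    using x by (cases g) (auto simp: dih_mult add.commute)
qed

definition czr :: "('a,'b) monoid_scheme \<Rightarrow> 'a set \<Rightarrow> 'a set" where
  "czr G S = {g \<in> carrier G. \<forall>h\<in>S. g \<otimes>\<^bsub>G\<^esub> h = h \<otimes>\<^bsub>G\<^esub> g}"

lemma (in group) czr_subgroup: "S \<subseteq> carrier G \<Longrightarrow> subgroup (czr G S) G"
proof (rule subgroupI)
  assume S: "S \<subseteq> carrier G"
  show "czr G S \<subseteq> carrier G" by (auto simp: czr_def)
  have "\<one> \<in> czr G S" using S unfolding czr_def by auto
  then show "czr G S \<noteq> {}" by blast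
  show "inv a \<in> czr G S" if "a \<in> czr G S" for a
  proof -
    have a: "a \<in> carrier G" "\<forall>h\<in>S. a \<otimes> h = h \<otimes> a" using that by (auto simp: czr_def)
    have "inv a \<otimes> h = h \<otimes> inv a" if h: "h \<in> S" for h
    proof -
      have hc: "h \<in> carrier G" using h S by auto
      have "inv a \<otimes> h = inv a \<otimes> (h \<otimes> a) \<otimes> inv a" using a hc by (simp add: m_assoc)
      also have "\<dots> = inv a \<otimes> (a \<otimes> h) \<otimes> inv a" using a h by simp
      also have "\<dots> = h \<otimes> inv a" using a hc by (simp add: m_assoc[symmetric])
      finally show ?thesis .
    qed
    then show ?thesis using a by (auto simp: czr_def)
  qed
  show "a \<otimes> b \<in> czr G S" if "a \<in> czr G S" "b \<in> czr G S" for a b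
  proof -
    have a: "a \<in> carrier G" "\<forall>h\<in>S. a \<otimes> h = h \<otimes> a" using that by (auto simp: czr_def)
    have b: "b \<in> carrier G" "\<forall>h\<in>S. b \<otimes> h = h \<otimes> b" using that by (auto simp: czr_def)
    have "a \<otimes> b \<otimes> h = h \<otimes> (a \<otimes> b)" if h: "h \<in> S" for h
    proof -
      have hc: "h \<in> carrier G" using h S by auto
      have "a \<otimes> b \<otimes> h = a \<otimes> (h \<otimes> b)" using a b hc h by (simp add: m_assoc)
      also have "\<dots> = h \<otimes> (a \<otimes> b)" using a b hc h by (simp add: m_assoc[symmetric])
      finally show ?thesis .
    qed
    then show ?thesis using a b by (auto simp: czr_def)
  qed
qed

lemma x_refl:
  assumes r: "3 \<le> r" and x: "involution (dihedral r) x" and y: "involution (dihedral r) y"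
    and gen: "generate (dihedral r) {x, y} = carrier (dihedral r)"
  shows "snd x"
proof (rule ccontr)
  assume nx: "\<not> snd x"
  let ?D = "dihedral r"
  have G: "group ?D" using r dih_group by simp
  have xc: "x \<in> carrier ?D" and yc: "y \<in> carrier ?D" using x y by (auto simp: involution_def)
  have cx: "\<forall>g\<in>carrier ?D. x \<otimes>\<^bsub>?D\<^esub> g = g \<otimes>\<^bsub>?D\<^esub> x" using central_rot[OF x nx] r by simp
  have s1: "subgroup (czr ?D {x,y}) ?D" by (rule group.czr_subgroup[OF G]) (use xc yc in auto)
  have xy: "x \<otimes>\<^bsub>?D\<^esub> y = y \<otimes>\<^bsub>?D\<^esub> x" using cx yc by blast
  have "{x,y} \<subseteq> czr ?D {x,y}" using xc yc xy unfolding czr_def by simp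
  then have "generate ?D {x,y} \<subseteq> czr ?D {x,y}" by (rule group.generate_subgroup_incl[OF G _ s1])
  then have c1: "carrier ?D \<subseteq> czr ?D {x,y}" using gen by simp
  have "y \<otimes>\<^bsub>?D\<^esub> g = g \<otimes>\<^bsub>?D\<^esub> y" if "g \<in> carrier ?D" for g
  proof -
    have "g \<otimes>\<^bsub>?D\<^esub> y = y \<otimes>\<^bsub>?D\<^esub> g" using c1 that unfolding czr_def by blast
    then show ?thesis by simp
  qed
  then have "{x,y} \<subseteq> czr ?D (carrier ?D)" using xc yc cx unfolding czr_def by blast
  moreover have s2: "subgroup (czr ?D (carrier ?D)) ?D" by (rule group.czr_subgroup[OF G]) simp
  ultimately have "generate ?D {x,y} \<subseteq> czr ?D (carrier ?D)" by (rule group.generate_subgroup_incl[OF G])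
  then have "carrier ?D \<subseteq> czr ?D (carrier ?D)" using gen by simp
  then show False using dih_nonabelian[OF r] unfolding czr_def by blast
qed

lemma Vset_iff: "v \<in> Vset p d \<longleftrightarrow> (\<forall>i. (i < d \<longrightarrow> 0 \<le> v i \<and> v i < int p) \<and> (d \<le> i \<longrightarrow> v i = 0))"
  by (simp add: Vset_def)

lemma vadd_closed: "0 < p \<Longrightarrow> u \<in> Vset p d \<Longrightarrow> w \<in> Vset p d \<Longrightarrow> vadd p u w \<in> Vset p d"
  by (simp add: Vset_iff vadd_def)

lemma vadd_comm: "vadd p u w = vadd p w u"
  by (simp add: vadd_def add.commute)

lemma vadd_assoc: "vadd p (vadd p u w) z = vadd p u (vadd p w z)"
  by (simp add: vadd_def mod_add_left_eq mod_add_right_eq add.assoc)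

lemma vadd_shuffle: "vadd p (vadd p a b) (vadd p c e) = vadd p (vadd p a c) (vadd p b e)"
  by (metis vadd_assoc vadd_comm)

lemma vzero_in: "0 < p \<Longrightarrow> vzero \<in> Vset p d" by (simp add: Vset_iff vzero_def)

lemma vadd_zero_left: "u \<in> Vset p d \<Longrightarrow> vadd p vzero u = u"
proof -
  assume u: "u \<in> Vset p d"
  show ?thesis
  proof
    fix i show "vadd p vzero u i = u i"
      using u[unfolded Vset_iff, rule_format, of i] by (cases "i < d") (auto simp: vadd_def vzero_def)
  qed
qed

lemma vadd_zero_right: "u \<in> Vset p d \<Longrightarrow> vadd p u vzero = u"
  using vadd_zero_left vadd_comm by metis

lemma vsmult_closed: "0 < p \<Longrightarrow> u \<in> Vset p d \<Longrightarrow> vsmult p c u \<in> Vset p d"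
  by (simp add: Vset_iff vsmult_def)

lemma vsmult_vadd: "vsmult p c (vadd p u w) = vadd p (vsmult p c u) (vsmult p c w)"
proof
  fix i
  have "(c * ((u i + w i) mod int p)) mod int p = (c * (u i + w i)) mod int p" by (simp add: mod_mult_right_eq)
  also have "\<dots> = (c * u i + c * w i) mod int p" by (simp add: algebra_simps)
  also have "\<dots> = ((c * u i) mod int p + (c * w i) mod int p) mod int p" by (simp add: mod_add_eq)
  finally show "vsmult p c (vadd p u w) i = vadd p (vsmult p c u) (vsmult p c w) i" by (simp add: vsmult_def vadd_def)
qed

lemma vsmult_comm: "vsmult p c (vsmult p k u) = vsmult p k (vsmult p c u)"
proof
  fix i
  have "(c * ((k * u i) mod int p)) mod int p = (c * (k * u i)) mod int p" by (simp add: mod_mult_right_eq)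
  also have "\<dots> = (k * (c * u i)) mod int p" by (simp add: algebra_simps)
  also have "\<dots> = (k * ((c * u i) mod int p)) mod int p" by (simp add: mod_mult_right_eq)
  finally show "vsmult p c (vsmult p k u) i = vsmult p k (vsmult p c u) i" by (simp add: vsmult_def)
qed

lemma vsmult_vzero: "vsmult p c vzero = vzero" by (simp add: vsmult_def vzero_def)

lemma vsmult_zero: "vsmult p 0 u = vzero" by (simp add: vsmult_def vzero_def)

lemma vneg: "vadd p (vsmult p (int p - 1) u) u = vzero"
proof
  fix i
  have "(((int p - 1) * u i) mod int p + u i) mod int p = ((int p - 1) * u i + u i) mod int p"
    by (simp add: mod_add_left_eq)
  also have "\<dots> = (int p * u i) mod int p" by (simp add: algebra_simps)
  also have "\<dots> = 0" by simp
  finally show "vadd p (vsmult p (int p - 1) u) u i = vzero i" by (simp add: vadd_def vsmult_def vzero_def)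
qed

lemma vhalf:
  assumes "odd p" "u \<in> Vset p d"
  shows "vsmult p ((int p + 1) div 2) (vadd p u u) = u"
proof
  fix i
  have h: "(int p + 1) div 2 * 2 = int p + 1" using assms(1) by (simp add: odd_iff_mod_2_eq_one) presburger
  have ui: "0 \<le> u i \<and> u i < int p" if "i < d" using assms(2) that by (simp add: Vset_iff)
  have uz: "u i = 0" if "\<not> i < d" using assms(2) that by (simp add: Vset_iff)
  have "((int p + 1) div 2 * ((u i + u i) mod int p)) mod int p = ((int p + 1) div 2 * (u i + u i)) mod int p"
    by (simp add: mod_mult_right_eq)
  also have "\<dots> = ((int p + 1) div 2 * 2 * u i) mod int p" by (simp add: algebra_simps)
  also have "\<dots> = (int p * u i + u i) mod int p" unfolding h by (simp add: algebra_simps)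
  also have "\<dots> = u i mod int p" by simp
  also have "\<dots> = u i" using ui uz by (cases "i < d") auto
  finally show "vsmult p ((int p + 1) div 2) (vadd p u u) i = u i" by (simp add: vadd_def vsmult_def)
qed

lemma vdiff:
  assumes "u \<in> Vset p d" "w \<in> Vset p d" "vadd p u (vsmult p (int p - 1) w) = vzero"
  shows "u = w"
proof
  fix i
  have "vadd p u (vsmult p (int p - 1) w) i = 0" using assms(3) by (simp add: vzero_def)
  then have "(u i + (int p - 1) * w i) mod int p = 0" by (simp add: vadd_def vsmult_def mod_add_right_eq)
  moreover have "u i + (int p - 1) * w i = (u i - w i) + int p * w i" by (simp add: algebra_simps)
  ultimately have "(u i - w i) mod int p = 0" by simp
  then have "u i mod int p = w i mod int p" by (simp add: mod_eq_dvd_iff mod_eq_0_iff_dvd)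
  then show "u i = w i" using assms(1,2) unfolding Vset_iff by (cases "i < d") auto
qed

lemma finite_Vset: "finite (Vset p d)"
proof -
  have "Vset p d \<subseteq> (\<lambda>f i. if i < d then f i else 0) ` (PiE {..<d} (\<lambda>_. {0..<int p}))"
  proof
    fix v assume v: "v \<in> Vset p d"
    have "v = (\<lambda>i. if i < d then restrict v {..<d} i else 0)"
      using v by (auto simp: Vset_iff)
    moreover have "restrict v {..<d} \<in> PiE {..<d} (\<lambda>_. {0..<int p})" using v by (auto simp: Vset_iff)
    ultimately show "v \<in> (\<lambda>f i. if i < d then f i else 0) ` (PiE {..<d} (\<lambda>_. {0..<int p}))" by blast
  qed
  moreover have "finite (PiE {..<d} (\<lambda>_. {0..<int p}))" by (simp add: finite_PiE)
  ultimately show ?thesis using finite_subset by blast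
qed

definition comm_op :: "nat \<Rightarrow> nat \<Rightarrow> ('g, 'b) monoid_scheme \<Rightarrow>
    ('g \<Rightarrow> (nat \<Rightarrow> int) \<Rightarrow> (nat \<Rightarrow> int)) \<Rightarrow> ((nat \<Rightarrow> int) \<Rightarrow> (nat \<Rightarrow> int)) \<Rightarrow> bool" where
  "comm_op p d D \<psi> T \<longleftrightarrow> (\<forall>w\<in>Vset p d. T w \<in> Vset p d) \<and>
     (\<forall>u\<in>Vset p d. \<forall>w\<in>Vset p d. T (vadd p u w) = vadd p (T u) (T w)) \<and>
     (\<forall>c\<in>{0..<int p}. \<forall>u\<in>Vset p d. T (vsmult p c u) = vsmult p c (T u)) \<and>
     (\<forall>g\<in>carrier D. \<forall>w\<in>Vset p d. T (\<psi> g w) = \<psi> g (T w))"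

locale dsetup =
  fixes p d r :: nat and \<psi> :: "nat \<times> bool \<Rightarrow> (nat \<Rightarrow> int) \<Rightarrow> (nat \<Rightarrow> int)"
  assumes p1: "1 < p" and podd: "odd p" and r3: "3 \<le> r" and rep: "is_rep p d (dihedral r) \<psi>"
begin

abbreviation "V \<equiv> Vset p d"
abbreviation "D \<equiv> dihedral r"

lemma p0: "0 < p" using p1 by simp

lemma DG: "group D" using r3 dih_group by simp

lemma hom: "\<psi> \<in> hom D (BijGroup V)" using rep by (simp add: is_rep_def)

lemma lin: "g \<in> carrier D \<Longrightarrow> linear_Fp p d (\<psi> g)" using rep by (simp add: is_rep_def)

lemma psi_Bij: "g \<in> carrier D \<Longrightarrow> \<psi> g \<in> Bij V"
  using hom by (auto simp: hom_def BijGroup_def)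

lemma psi_V: "g \<in> carrier D \<Longrightarrow> w \<in> V \<Longrightarrow> \<psi> g w \<in> V"
  using psi_Bij Bij_imp_funcset by blast

lemma psi_mult: "g \<in> carrier D \<Longrightarrow> h \<in> carrier D \<Longrightarrow> w \<in> V \<Longrightarrow> \<psi> (g \<otimes>\<^bsub>D\<^esub> h) w = \<psi> g (\<psi> h w)"
proof -
  assume g: "g \<in> carrier D" and h: "h \<in> carrier D" and w: "w \<in> V"
  have "\<psi> (g \<otimes>\<^bsub>D\<^esub> h) = \<psi> g \<otimes>\<^bsub>BijGroup V\<^esub> \<psi> h" using hom g h by (simp add: hom_mult)
  also have "\<dots> = compose V (\<psi> g) (\<psi> h)" using psi_Bij[OF g] psi_Bij[OF h] by (simp add: BijGroup_def)
  finally show ?thesis using w by (simp add: compose_def)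
qed

lemma psi_one: "w \<in> V \<Longrightarrow> \<psi> \<one>\<^bsub>D\<^esub> w = w"
proof -
  assume w: "w \<in> V"
  interpret gh: group_hom D "BijGroup V" \<psi>
    using DG group_BijGroup hom by (simp add: group_hom_def group_hom_axioms_def)
  have "\<psi> \<one>\<^bsub>D\<^esub> = \<one>\<^bsub>BijGroup V\<^esub>" by simp
  then show ?thesis using w by (simp add: BijGroup_def)
qed

lemma psi_add: "g \<in> carrier D \<Longrightarrow> u \<in> V \<Longrightarrow> w \<in> V \<Longrightarrow> \<psi> g (vadd p u w) = vadd p (\<psi> g u) (\<psi> g w)"
  using lin by (simp add: linear_Fp_def)

lemma psi_smult: "g \<in> carrier D \<Longrightarrow> c \<in> {0..<int p} \<Longrightarrow> u \<in> V \<Longrightarrow> \<psi> g (vsmult p c u) = vsmult p c (\<psi> g u)"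
  using lin by (simp add: linear_Fp_def)

lemma lin_zero: assumes "\<forall>c\<in>{0..<int p}. \<forall>u\<in>V. T (vsmult p c u) = vsmult p c (T u)"
  shows "T vzero = vzero"
proof -
  have "T (vsmult p 0 vzero) = vsmult p 0 (T vzero)" using assms p0 vzero_in[OF p0] by simp
  then show ?thesis by (simp add: vsmult_zero)
qed

lemma psi_zero: "g \<in> carrier D \<Longrightarrow> \<psi> g vzero = vzero"
  by (rule lin_zero) (simp add: psi_smult)

lemma comm_op_zero: "comm_op p d D \<psi> (\<lambda>w. vzero)"
  unfolding comm_op_def using vzero_in[OF p0] psi_zero
  by (simp add: vsmult_zero vadd_zero_left vsmult_vzero)

lemma comm_op_add:
  assumes "comm_op p d D \<psi> T1" "comm_op p d D \<psi> T2"
  shows "comm_op p d D \<psi> (\<lambda>w. vadd p (T1 w) (T2 w))"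
  using assms unfolding comm_op_def
  by (simp add: vadd_closed p0 vadd_shuffle vsmult_vadd psi_add)

lemma comm_op_smult:
  assumes "comm_op p d D \<psi> T" "c \<in> {0..<int p}"
  shows "comm_op p d D \<psi> (\<lambda>w. vsmult p c (T w))"
  using assms unfolding comm_op_def
  by (simp add: vsmult_closed p0 vsmult_vadd psi_smult vsmult_comm)

lemma inv_snd: "g \<in> carrier D \<Longrightarrow> snd (inv\<^bsub>D\<^esub> g) = snd g"
proof -
  assume g: "g \<in> carrier D"
  have "g \<otimes>\<^bsub>D\<^esub> inv\<^bsub>D\<^esub> g = \<one>\<^bsub>D\<^esub>" using g DG by (simp add: group.r_inv)
  then have "snd (g \<otimes>\<^bsub>D\<^esub> inv\<^bsub>D\<^esub> g) = False" by (simp add: dih_one)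
  then show ?thesis by (simp add: dih_snd)
qed

lemma refl_inv: "h \<in> carrier D \<Longrightarrow> snd h \<Longrightarrow> inv\<^bsub>D\<^esub> h = h"
  using dih_refl_sq DG by (metis group.inv_equality)

lemma refl_conj: 
  assumes g: "g \<in> carrier D" "\<not> snd g" and h: "h \<in> carrier D" "snd h"
  shows "h \<otimes>\<^bsub>D\<^esub> g = inv\<^bsub>D\<^esub> g \<otimes>\<^bsub>D\<^esub> h"
proof -
  have k: "h \<otimes>\<^bsub>D\<^esub> g \<in> carrier D" using g h DG by (simp add: group.is_monoid monoid.m_closed)
  have "snd (h \<otimes>\<^bsub>D\<^esub> g)" using g h by (simp add: dih_snd)
  then have "h \<otimes>\<^bsub>D\<^esub> g = inv\<^bsub>D\<^esub> (h \<otimes>\<^bsub>D\<^esub> g)" using refl_inv[OF k] by simp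
  also have "\<dots> = inv\<^bsub>D\<^esub> g \<otimes>\<^bsub>D\<^esub> inv\<^bsub>D\<^esub> h" using g h DG by (simp add: group.inv_mult_group)
  also have "\<dots> = inv\<^bsub>D\<^esub> g \<otimes>\<^bsub>D\<^esub> h" using refl_inv h by simp
  finally show ?thesis .
qed

lemma comm_op_rot:
  assumes g: "g \<in> carrier D" "\<not> snd g"
  shows "comm_op p d D \<psi> (\<lambda>w. vadd p (\<psi> g w) (\<psi> (inv\<^bsub>D\<^esub> g) w))"
proof -
  have gi: "inv\<^bsub>D\<^esub> g \<in> carrier D" "\<not> snd (inv\<^bsub>D\<^esub> g)" using g DG inv_snd by (auto simp: group.inv_closed)
  have ginv: "inv\<^bsub>D\<^esub> (inv\<^bsub>D\<^esub> g) = g" using g DG by (simp add: group.inv_inv)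
  have comm: "\<psi> h (vadd p (\<psi> g w) (\<psi> (inv\<^bsub>D\<^esub> g) w)) = vadd p (\<psi> g (\<psi> h w)) (\<psi> (inv\<^bsub>D\<^esub> g) (\<psi> h w))"
    if h: "h \<in> carrier D" and w: "w \<in> V" for h w
  proof -
    have "\<psi> h (vadd p (\<psi> g w) (\<psi> (inv\<^bsub>D\<^esub> g) w)) = vadd p (\<psi> (h \<otimes>\<^bsub>D\<^esub> g) w) (\<psi> (h \<otimes>\<^bsub>D\<^esub> inv\<^bsub>D\<^esub> g) w)"
      using h w g gi by (simp add: psi_add psi_V psi_mult)
    also have "\<dots> = vadd p (\<psi> g (\<psi> h w)) (\<psi> (inv\<^bsub>D\<^esub> g) (\<psi> h w))"
    proof (cases "snd h")
      case True
      have "h \<otimes>\<^bsub>D\<^esub> g = inv\<^bsub>D\<^esub> g \<otimes>\<^bsub>D\<^esub> h" using refl_conj g h True by simp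
      moreover have "h \<otimes>\<^bsub>D\<^esub> inv\<^bsub>D\<^esub> g = g \<otimes>\<^bsub>D\<^esub> h" using refl_conj[OF gi h True] ginv by simp
      ultimately show ?thesis using h w g gi by (simp add: psi_mult vadd_comm)
    next
      case False
      have "h \<otimes>\<^bsub>D\<^esub> g = g \<otimes>\<^bsub>D\<^esub> h" using dih_rot_comm g False by simp
      moreover have "h \<otimes>\<^bsub>D\<^esub> inv\<^bsub>D\<^esub> g = inv\<^bsub>D\<^esub> g \<otimes>\<^bsub>D\<^esub> h" using dih_rot_comm gi False by simp
      ultimately show ?thesis using h w g gi by (simp add: psi_mult)
    qed
    finally show ?thesis .
  qed
  show ?thesis unfolding comm_op_def
    using g gi comm
    by (simp add: vadd_closed p0 psi_V psi_add psi_smult vsmult_vadd vadd_shuffle)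
qed

end

locale msetup = dsetup +
  fixes x :: "nat \<times> bool" and v v' :: "nat \<Rightarrow> int"
  assumes irr: "irreducible_rep p d (dihedral r) \<psi>"
    and xinv: "involution (dihedral r) x" and xs: "snd x"
    and vc: "v \<in> centraliser_V p d (dihedral r) \<psi> x" and vnz: "v \<noteq> vzero"
    and v'c: "v' \<in> centraliser_V p d (dihedral r) \<psi> x" and v'nz: "v' \<noteq> vzero"
begin

lemma xc: "x \<in> carrier D" using xinv by (simp add: involution_def)

lemma cent: assumes "w \<in> centraliser_V p d D \<psi> x" shows "w \<in> V" "\<psi> x w = w"
proof -
  show w: "w \<in> V" using assms by (simp add: centraliser_V_def)
  have "(vadd p w (\<psi> \<one>\<^bsub>D\<^esub> vzero), \<one>\<^bsub>D\<^esub> \<otimes>\<^bsub>D\<^esub> x) = (vadd p vzero (\<psi> x w), x \<otimes>\<^bsub>D\<^esub> \<one>\<^bsub>D\<^esub>)"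
    using assms by (simp add: centraliser_V_def semidirect_def)
  then have "vadd p w (\<psi> \<one>\<^bsub>D\<^esub> vzero) = vadd p vzero (\<psi> x w)" by simp
  then show "\<psi> x w = w"
    using w psi_one vzero_in[OF p0] psi_V[OF xc w] by (simp add: vadd_zero_left vadd_zero_right)
qed

definition "W0 = {w. \<exists>T. comm_op p d D \<psi> T \<and> w = T v}"

lemma W0_add: "a \<in> W0 \<Longrightarrow> b \<in> W0 \<Longrightarrow> vadd p a b \<in> W0"
  unfolding W0_def using comm_op_add by blast

lemma W0_smult: "a \<in> W0 \<Longrightarrow> c \<in> {0..<int p} \<Longrightarrow> vsmult p c a \<in> W0"
  unfolding W0_def using comm_op_smult by blast

lemma W0_zero: "vzero \<in> W0"
  unfolding W0_def using comm_op_zero by blast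

definition "U = {w \<in> V. \<forall>g\<in>carrier D. vadd p (\<psi> g w) (\<psi> x (\<psi> g w)) \<in> W0}"

lemma U_sub: "subspace_Fp p d U"
  unfolding subspace_Fp_def
proof (intro conjI ballI)
  show "U \<subseteq> V" by (auto simp: U_def)
  show "vzero \<in> U" unfolding U_def using vzero_in[OF p0] psi_zero xc W0_zero
    by (simp add: vadd_zero_left)
  show "vadd p u w \<in> U" if u: "u \<in> U" and w: "w \<in> U" for u w
  proof -
    have uV: "u \<in> V" and wV: "w \<in> V" using u w by (auto simp: U_def)
    have "vadd p (\<psi> g (vadd p u w)) (\<psi> x (\<psi> g (vadd p u w))) \<in> W0" if g: "g \<in> carrier D" for g
    proof -
      have "vadd p (\<psi> g (vadd p u w)) (\<psi> x (\<psi> g (vadd p u w)))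
          = vadd p (vadd p (\<psi> g u) (\<psi> x (\<psi> g u))) (vadd p (\<psi> g w) (\<psi> x (\<psi> g w)))"
        using g uV wV xc by (simp add: psi_add psi_V vadd_shuffle)
      moreover have "vadd p (\<psi> g u) (\<psi> x (\<psi> g u)) \<in> W0" "vadd p (\<psi> g w) (\<psi> x (\<psi> g w)) \<in> W0"
        using u w g by (auto simp: U_def)
      ultimately show ?thesis using W0_add by simp
    qed
    then show ?thesis using uV wV by (simp add: U_def vadd_closed p0)
  qed
  show "vsmult p c u \<in> U" if c: "c \<in> {0..<int p}" and u: "u \<in> U" for c u
  proof -
    have uV: "u \<in> V" using u by (auto simp: U_def)
    have "vadd p (\<psi> g (vsmult p c u)) (\<psi> x (\<psi> g (vsmult p c u))) \<in> W0" if g: "g \<in> carrier D" for g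
    proof -
      have "vadd p (\<psi> g (vsmult p c u)) (\<psi> x (\<psi> g (vsmult p c u)))
          = vsmult p c (vadd p (\<psi> g u) (\<psi> x (\<psi> g u)))"
        using g uV xc c by (simp add: psi_smult psi_V vsmult_vadd)
      moreover have "vadd p (\<psi> g u) (\<psi> x (\<psi> g u)) \<in> W0" using u g by (auto simp: U_def)
      ultimately show ?thesis using W0_smult c by simp
    qed
    then show ?thesis using uV by (simp add: U_def vsmult_closed p0)
  qed
qed

lemma U_inv: "h \<in> carrier D \<Longrightarrow> \<psi> h ` U \<subseteq> U"
proof
  fix w assume h: "h \<in> carrier D" and "w \<in> \<psi> h ` U"
  then obtain u where u: "u \<in> U" "w = \<psi> h u" by auto
  have uV: "u \<in> V" using u by (simp add: U_def)
  have "vadd p (\<psi> g w) (\<psi> x (\<psi> g w)) \<in> W0" if g: "g \<in> carrier D" for g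
  proof -
    have gh: "g \<otimes>\<^bsub>D\<^esub> h \<in> carrier D" using g h DG by (simp add: group.is_monoid monoid.m_closed)
    have "\<psi> g w = \<psi> (g \<otimes>\<^bsub>D\<^esub> h) u" using u g h uV by (simp add: psi_mult)
    then show ?thesis using u(1) gh by (simp add: U_def)
  qed
  then show "w \<in> U" using u uV h by (simp add: U_def psi_V)
qed

lemma rot_W0: assumes g: "g \<in> carrier D" "\<not> snd g"
  shows "vadd p (\<psi> g v) (\<psi> (inv\<^bsub>D\<^esub> g) v) \<in> W0"
  unfolding W0_def using comm_op_rot[OF g] by blast

lemma v_U: "v \<in> U"
proof -
  have vV: "v \<in> V" and xv: "\<psi> x v = v" using cent vc by auto
  have "vadd p (\<psi> g v) (\<psi> x (\<psi> g v)) \<in> W0" if g: "g \<in> carrier D" for g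
  proof (cases "snd g")
    case False
    have gi: "inv\<^bsub>D\<^esub> g \<in> carrier D" using g DG by (simp add: group.inv_closed)
    have "\<psi> x (\<psi> g v) = \<psi> (x \<otimes>\<^bsub>D\<^esub> g) v" using g xc vV by (simp add: psi_mult)
    also have "\<dots> = \<psi> (inv\<^bsub>D\<^esub> g \<otimes>\<^bsub>D\<^esub> x) v" using refl_conj[OF g False xc xs] by simp
    also have "\<dots> = \<psi> (inv\<^bsub>D\<^esub> g) v" using gi xc vV xv by (simp add: psi_mult)
    finally show ?thesis using rot_W0[OF g False] by simp
  next
    case True
    let ?g = "g \<otimes>\<^bsub>D\<^esub> x"
    have g': "?g \<in> carrier D" using g xc DG by (simp add: group.is_monoid monoid.m_closed)
    have ns: "\<not> snd ?g" using True xs by (simp add: dih_snd)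
    have e1: "\<psi> ?g v = \<psi> g v" using g xc vV xv by (simp add: psi_mult)
    have "inv\<^bsub>D\<^esub> ?g = inv\<^bsub>D\<^esub> x \<otimes>\<^bsub>D\<^esub> inv\<^bsub>D\<^esub> g" using g xc DG by (simp add: group.inv_mult_group)
    also have "\<dots> = x \<otimes>\<^bsub>D\<^esub> g" using refl_inv g xc xs True by simp
    finally have "\<psi> (inv\<^bsub>D\<^esub> ?g) v = \<psi> x (\<psi> g v)" using g xc vV by (simp add: psi_mult)
    then show ?thesis using rot_W0[OF g' ns] e1 by simp
  qed
  then show ?thesis using vV by (simp add: U_def)
qed

lemma U_all: "U = V"
proof -
  have "U = {vzero} \<or> U = V" using irr U_sub U_inv by (simp add: irreducible_rep_def)
  then show ?thesis using v_U vnz by auto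
qed

lemma halfc: "(int p + 1) div 2 \<in> {0..<int p}" using p1 by auto

lemma exT: "\<exists>T. comm_op p d D \<psi> T \<and> T v = v'"
proof -
  have v'V: "v' \<in> V" and xv': "\<psi> x v' = v'" using cent v'c by auto
  have "v' \<in> U" using U_all v'V by simp
  then have "vadd p (\<psi> \<one>\<^bsub>D\<^esub> v') (\<psi> x (\<psi> \<one>\<^bsub>D\<^esub> v')) \<in> W0"
    using DG by (simp add: U_def group.is_monoid monoid.one_closed)
  then have "vadd p v' v' \<in> W0" using psi_one v'V xv' by simp
  then obtain T where T: "comm_op p d D \<psi> T" "T v = vadd p v' v'" by (auto simp: W0_def)
  have "comm_op p d D \<psi> (\<lambda>w. vsmult p ((int p + 1) div 2) (T w))" using comm_op_smult[OF T(1) halfc] .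
  moreover have "vsmult p ((int p + 1) div 2) (T v) = v'" using T(2) vhalf[OF podd v'V] by simp
  ultimately show ?thesis by blast
qed

end

context msetup
begin

lemma T_bij:
  assumes T: "comm_op p d D \<psi> T" "T v = v'"
  shows "bij_betw T V V"
proof -
  have TV: "\<And>w. w \<in> V \<Longrightarrow> T w \<in> V" and Tadd: "\<And>u w. u \<in> V \<Longrightarrow> w \<in> V \<Longrightarrow> T (vadd p u w) = vadd p (T u) (T w)"
    and Tsm: "\<And>c u. c \<in> {0..<int p} \<Longrightarrow> u \<in> V \<Longrightarrow> T (vsmult p c u) = vsmult p c (T u)"
    and Tpsi: "\<And>g w. g \<in> carrier D \<Longrightarrow> w \<in> V \<Longrightarrow> T (\<psi> g w) = \<psi> g (T w)"
    using T(1) unfolding comm_op_def by auto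
  have T0: "T vzero = vzero" by (rule lin_zero) (simp add: Tsm)
  have z0: "vadd p vzero vzero = vzero" using vadd_zero_left[OF vzero_in[OF p0]] .
  define K where "K = {w \<in> V. T w = vzero}"
  have Ksub: "subspace_Fp p d K"
    unfolding subspace_Fp_def K_def using vzero_in[OF p0] T0 z0
    by (auto simp: Tadd Tsm vadd_closed vsmult_closed p0 vsmult_vzero)
  have Kinv: "\<psi> g ` K \<subseteq> K" if g: "g \<in> carrier D" for g
    using g by (auto simp: K_def Tpsi psi_V psi_zero)
  have "K = {vzero} \<or> K = V" using irr Ksub Kinv by (simp add: irreducible_rep_def)
  moreover have "v \<in> V" using cent vc by auto
  moreover have "v \<notin> K" using T(2) v'nz by (simp add: K_def)
  ultimately have K0: "K = {vzero}" by auto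
  have pm: "int p - 1 \<in> {0..<int p}" using p1 by simp
  have inj: "inj_on T V"
  proof (rule inj_onI)
    fix u w assume u: "u \<in> V" and w: "w \<in> V" and e: "T u = T w"
    let ?z = "vadd p u (vsmult p (int p - 1) w)"
    have zV: "?z \<in> V" using u w by (simp add: vadd_closed vsmult_closed p0)
    have "T ?z = vadd p (T w) (vsmult p (int p - 1) (T w))"
      using u w e pm by (simp add: Tadd Tsm vsmult_closed p0)
    also have "\<dots> = vzero" using vneg vadd_comm by metis
    finally have "?z \<in> K" using zV by (simp add: K_def)
    then have "?z = vzero" using K0 by simp
    then show "u = w" using vdiff u w by blast
  qed
  have "T ` V = V" using endo_inj_surj[OF finite_Vset _ inj] TV by blast
  then show ?thesis using inj by (simp add: bij_betw_def)
qed

end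

context dsetup
begin

abbreviation "G \<equiv> semidirect p d D \<psi>"

lemma sd_mult: "(u,a) \<otimes>\<^bsub>G\<^esub> (w,b) = (vadd p u (\<psi> a w), a \<otimes>\<^bsub>D\<^esub> b)"
  by (simp add: semidirect_def)
lemma sd_one: "\<one>\<^bsub>G\<^esub> = (vzero, \<one>\<^bsub>D\<^esub>)" by (simp add: semidirect_def)
lemma sd_carrier: "carrier G = V \<times> carrier D" by (simp add: semidirect_def)

lemma Dm: "a \<in> carrier D \<Longrightarrow> b \<in> carrier D \<Longrightarrow> a \<otimes>\<^bsub>D\<^esub> b \<in> carrier D"
  using DG by (simp add: group.is_monoid monoid.m_closed)

lemma sd_group: "group G"
proof (rule groupI)
  show "\<And>x y. x \<in> carrier G \<Longrightarrow> y \<in> carrier G \<Longrightarrow> x \<otimes>\<^bsub>G\<^esub> y \<in> carrier G"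
    by (auto simp: sd_carrier sd_mult vadd_closed p0 psi_V Dm)
  show "\<one>\<^bsub>G\<^esub> \<in> carrier G" using DG vzero_in[OF p0]
    by (simp add: sd_one sd_carrier group.is_monoid monoid.one_closed)
  show "x \<otimes>\<^bsub>G\<^esub> y \<otimes>\<^bsub>G\<^esub> z = x \<otimes>\<^bsub>G\<^esub> (y \<otimes>\<^bsub>G\<^esub> z)"
    if xyzc: "x \<in> carrier G" "y \<in> carrier G" "z \<in> carrier G" for x y z
  proof -
    obtain u a w b s c where xyz: "x = (u,a)" "y = (w,b)" "z = (s,c)" "u \<in> V" "w \<in> V" "s \<in> V"
      "a \<in> carrier D" "b \<in> carrier D" "c \<in> carrier D"
      using xyzc unfolding sd_carrier by (metis mem_Times_iff prod.collapse)
    show ?thesis unfolding xyz(1-3) sd_mult using xyz(4-9) DG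
      by (simp add: psi_mult psi_add psi_V vadd_assoc group.is_monoid monoid.m_assoc)
  qed
  show "\<one>\<^bsub>G\<^esub> \<otimes>\<^bsub>G\<^esub> x = x" if "x \<in> carrier G" for x
    using that DG by (auto simp: sd_carrier sd_one sd_mult psi_one vadd_zero_left group.is_monoid monoid.l_one)
  show "\<exists>y\<in>carrier G. y \<otimes>\<^bsub>G\<^esub> x = \<one>\<^bsub>G\<^esub>" if xc0: "x \<in> carrier G" for x
  proof -
    obtain u a where x: "x = (u,a)" "u \<in> V" "a \<in> carrier D"
      using xc0 unfolding sd_carrier by (metis mem_Times_iff prod.collapse)
    let ?a = "inv\<^bsub>D\<^esub> a" and ?n = "vsmult p (int p - 1) u"
    have ai: "?a \<in> carrier D" "?a \<otimes>\<^bsub>D\<^esub> a = \<one>\<^bsub>D\<^esub>" using x DG by (auto simp: group.inv_closed group.l_inv)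
    have nV: "?n \<in> V" using x by (simp add: vsmult_closed p0)
    have "(\<psi> ?a ?n, ?a) \<otimes>\<^bsub>G\<^esub> x = (vadd p (\<psi> ?a ?n) (\<psi> ?a u), ?a \<otimes>\<^bsub>D\<^esub> a)"
      using x by (simp add: sd_mult psi_mult)
    also have "\<dots> = (\<psi> ?a (vadd p ?n u), \<one>\<^bsub>D\<^esub>)" using ai nV x by (simp add: psi_add)
    also have "\<dots> = \<one>\<^bsub>G\<^esub>" using ai by (simp add: vneg psi_zero sd_one)
    finally show ?thesis using ai nV by (intro bexI[of _ "(\<psi> ?a ?n, ?a)"]) (auto simp: sd_carrier psi_V)
  qed
qed

end

context msetup
begin

lemma final:
  assumes yc: "y \<in> carrier D"
  shows "rota_map_iso G ((v, \<one>\<^bsub>D\<^esub>) \<otimes>\<^bsub>G\<^esub> (vzero, x)) (vzero, y)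
                       G ((v', \<one>\<^bsub>D\<^esub>) \<otimes>\<^bsub>G\<^esub> (vzero, x)) (vzero, y)"
proof -
  obtain T where T: "comm_op p d D \<psi> T" "T v = v'" using exT by blast
  have TV: "\<And>w. w \<in> V \<Longrightarrow> T w \<in> V" and Tadd: "\<And>u w. u \<in> V \<Longrightarrow> w \<in> V \<Longrightarrow> T (vadd p u w) = vadd p (T u) (T w)"
    and Tsm: "\<And>c u. c \<in> {0..<int p} \<Longrightarrow> u \<in> V \<Longrightarrow> T (vsmult p c u) = vsmult p c (T u)"
    and Tpsi: "\<And>g w. g \<in> carrier D \<Longrightarrow> w \<in> V \<Longrightarrow> T (\<psi> g w) = \<psi> g (T w)"
    using T(1) unfolding comm_op_def by auto
  have T0: "T vzero = vzero" by (rule lin_zero) (simp add: Tsm)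
  have tb: "bij_betw T V V" using T_bij[OF T] .
  define \<alpha> where "\<alpha> = map_prod T (id :: nat \<times> bool \<Rightarrow> nat \<times> bool)"
  have ab: "bij_betw \<alpha> (carrier G) (carrier G)"
    unfolding \<alpha>_def sd_carrier by (rule bij_betw_map_prod[OF tb bij_betw_id])
  have ah: "\<alpha> \<in> hom G G"
  proof (rule homI)
    show "\<alpha> z \<in> carrier G" if "z \<in> carrier G" for z
      using that TV by (auto simp: \<alpha>_def sd_carrier)
    show "\<alpha> (z \<otimes>\<^bsub>G\<^esub> z') = \<alpha> z \<otimes>\<^bsub>G\<^esub> \<alpha> z'" if "z \<in> carrier G" "z' \<in> carrier G" for z z'
      using that by (auto simp: \<alpha>_def sd_carrier sd_mult Tadd Tpsi psi_V)
  qed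
  have vV: "v \<in> V" using cent vc by auto
  have v'V: "v' \<in> V" using cent v'c by auto
  have one: "\<one>\<^bsub>D\<^esub> \<in> carrier D" using DG by (simp add: group.is_monoid monoid.one_closed)
  have r1: "(v, \<one>\<^bsub>D\<^esub>) \<otimes>\<^bsub>G\<^esub> (vzero, x) = (v, \<one>\<^bsub>D\<^esub> \<otimes>\<^bsub>D\<^esub> x)"
    using vV psi_one vzero_in[OF p0] by (simp add: sd_mult vadd_zero_right)
  have r2: "(v', \<one>\<^bsub>D\<^esub>) \<otimes>\<^bsub>G\<^esub> (vzero, x) = (v', \<one>\<^bsub>D\<^esub> \<otimes>\<^bsub>D\<^esub> x)"
    using v'V psi_one vzero_in[OF p0] by (simp add: sd_mult vadd_zero_right)
  show ?thesis unfolding r1 r2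
  proof (rule auto_rota_iso[OF sd_group ah ab])
    show "(v, \<one>\<^bsub>D\<^esub> \<otimes>\<^bsub>D\<^esub> x) \<in> carrier G" using vV one xc by (simp add: sd_carrier Dm)
    show "(vzero, y) \<in> carrier G" using yc vzero_in[OF p0] by (simp add: sd_carrier)
    show "\<alpha> (v, \<one>\<^bsub>D\<^esub> \<otimes>\<^bsub>D\<^esub> x) = (v', \<one>\<^bsub>D\<^esub> \<otimes>\<^bsub>D\<^esub> x)" using T(2) by (simp add: \<alpha>_def)
    show "\<alpha> (vzero, y) = (vzero, y)" using T0 by (simp add: \<alpha>_def)
  qed
qed

end

theorem proposition3p2:
  fixes p r d :: nat
    and \<psi> :: "nat \<times> bool \<Rightarrow> (nat \<Rightarrow> int) \<Rightarrow> (nat \<Rightarrow> int)"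
    and x y :: "nat \<times> bool"
    and v v' :: "nat \<Rightarrow> int"
  assumes "Factorial_Ring.prime p" and "odd p"
    and "r \<ge> 3" and "\<not> p dvd r"
    and "d \<ge> 2"
    and "irreducible_rep p d (dihedral r) \<psi>"
    and "involution (dihedral r) x" and "involution (dihedral r) y"
    and "generate (dihedral r) {x, y} = carrier (dihedral r)"
    and "v \<in> centraliser_V p d (dihedral r) \<psi> x" and "v \<noteq> vzero"
    and "v' \<in> centraliser_V p d (dihedral r) \<psi> x" and "v' \<noteq> vzero"
  shows "rota_map_iso
           (semidirect p d (dihedral r) \<psi>)
           ((v, \<one>\<^bsub>dihedral r\<^esub>) \<otimes>\<^bsub>semidirect p d (dihedral r) \<psi>\<^esub> (vzero, x))
           (vzero, y)
           (semidirect p d (dihedral r) \<psi>)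
           ((v', \<one>\<^bsub>dihedral r\<^esub>) \<otimes>\<^bsub>semidirect p d (dihedral r) \<psi>\<^esub> (vzero, x))
           (vzero, y)"
proof -
  have p1: "1 < p" using assms(1) prime_gt_1_nat by blast
  have xs: "snd x" using x_refl assms(3,7,8,9) by blast
  interpret msetup p d r \<psi> x v v'
    using assms p1 xs by unfold_locales (auto simp: irreducible_rep_def)
  have yc: "y \<in> carrier (dihedral r)" using assms(8) by (simp add: involution_def)
  show ?thesis using final[OF yc] .
qed

end
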